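(* Let $\mathcal M,\mathcal X,\mathcal Y$ be finite sets, $P_M$ a distribution on $\mathcal M$, $W_{Y|X}$ a channel from $\mathcal X$ to $\mathcal Y$, and $P_X$ any distribution on $\mathcal X$. For every $s\in(0,\tfrac12]$, \[ P_{js}(P_M,W_{Y|X})\le e^{\frac{s}{1-s}\left(H_{1-s}(M)-I^{\uparrow}_{1-s}(X;Y|P_X\times W_{Y|X})\right)} =\Big(\sum_m P_M(m)^{1-s}\Big)^{\frac1{1-s}}\sum_y\Big(\sum_x P_X(x)W_{Y|X}(y|x)^{1-s}\Big)^{\frac1{1-s}}. \]
   Context: A code $\phi=(\mathsf e,\mathsf d)$ consists of $\mathsf e:\mathcal M\to\mathcal X$ and $\mathsf d:\mathcal Y\to\mathcal M$; $P_{js}[\phi|P_M,W_{Y|X}]:=\sum_{m}P_M(m)W_{Y|X}(\{y:\mathsf d(y)\ne m\}|\mathsf e(m))$ and $P_{js}(P_M,W_{Y|X}):=\inf_\phi P_{js}[\phi|P_M,W_{Y|X}]$. $H_{1-s}(M):=\frac1s\log\sum_m P_M(m)^{1-s}$. For $P_{XY}=P_X\times W_{Y|X}$, $I^{\uparrow}_{1-s}(X;Y|P_{XY}):=-\frac{1-s}{s}\log\sum_y\big(\sum_x P_X(x)W_{Y|X}(y|x)^{1-s}\big)^{\frac1{1-s}}$. *)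

theory Defs
  imports "HOL-Analysis.Analysis"
begin

definition is_dist :: "('a::finite \<Rightarrow> real) \<Rightarrow> bool" where
  "is_dist P \<longleftrightarrow> (\<forall>a. 0 \<le> P a) \<and> (\<Sum>a\<in>UNIV. P a) = 1"

definition is_channel :: "('x::finite \<Rightarrow> 'y::finite \<Rightarrow> real) \<Rightarrow> bool" where
  "is_channel W \<longleftrightarrow> (\<forall>x. is_dist (W x))"

definition err_prob :: "('m::finite \<Rightarrow> real) \<Rightarrow> ('x::finite \<Rightarrow> 'y::finite \<Rightarrow> real)
    \<Rightarrow> ('m \<Rightarrow> 'x) \<Rightarrow> ('y \<Rightarrow> 'm) \<Rightarrow> real" where
  "err_prob PM W e d = (\<Sum>m\<in>UNIV. PM m * (\<Sum>y\<in>{y. d y \<noteq> m}. W (e m) y))"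

definition P_js :: "('m::finite \<Rightarrow> real) \<Rightarrow> ('x::finite \<Rightarrow> 'y::finite \<Rightarrow> real) \<Rightarrow> real" where
  "P_js PM W = (INF ed \<in> (UNIV :: (('m \<Rightarrow> 'x) \<times> ('y \<Rightarrow> 'm)) set). err_prob PM W (fst ed) (snd ed))"

definition H_renyi :: "real \<Rightarrow> ('m::finite \<Rightarrow> real) \<Rightarrow> real" where
  "H_renyi s PM = (1 / s) * ln (\<Sum>m\<in>UNIV. PM m powr (1 - s))"

definition I_up :: "real \<Rightarrow> ('x::finite \<Rightarrow> real) \<Rightarrow> ('x \<Rightarrow> 'y::finite \<Rightarrow> real) \<Rightarrow> real" where
  "I_up s PX W = - ((1 - s) / s) *
     ln (\<Sum>y\<in>UNIV. (\<Sum>x\<in>UNIV. PX x * W x y powr (1 - s)) powr (1 / (1 - s)))"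

end

theory Submission
  imports Defs "HOL-Probability.Product_PMF"
begin


lemma jensen_powr_sum:
  fixes w g :: "'a \<Rightarrow> real" and S :: "'a set" and r :: real
  assumes S: "finite S" and w: "\<And>i. i \<in> S \<Longrightarrow> 0 \<le> w i" and ws: "sum w S = 1"
    and g: "\<And>i. i \<in> S \<Longrightarrow> 0 \<le> g i" and r: "0 < r" "r \<le> 1"
  shows "(\<Sum>i\<in>S. w i * g i powr r) \<le> (\<Sum>i\<in>S. w i * g i) powr r"
proof (cases "(\<Sum>i\<in>S. w i * g i) = 0")
  case True
  have "\<And>i. i \<in> S \<Longrightarrow> w i * g i = 0"
    using sum_nonneg_eq_0_iff[OF S, of "\<lambda>i. w i * g i"] True w g by auto
  then have z: "\<And>i. i \<in> S \<Longrightarrow> w i * g i powr r = 0" by auto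
  have "(\<Sum>i\<in>S. w i * g i powr r) = 0" by (rule sum.neutral) (use z in blast)
  then show ?thesis using True by simp
next
  case False
  define c where "c = (\<Sum>i\<in>S. w i * g i)"
  have "c \<ge> 0" unfolding c_def by (intro sum_nonneg mult_nonneg_nonneg w g)
  then have c0: "c > 0" using False unfolding c_def by linarith
  have pt: "g i powr r * c powr (1 - r) \<le> r * g i + (1 - r) * c" if "i \<in> S" for i
  proof (cases "g i = 0")
    case True then show ?thesis using r c0 by simp
  next
    case False
    then show ?thesis using Youngs_inequality_0[of r "1 - r" "g i" c] r c0 g[OF that] by simp
  qed
  have "(\<Sum>i\<in>S. w i * g i powr r) * c powr (1 - r) = (\<Sum>i\<in>S. w i * (g i powr r * c powr (1 - r)))"
    by (simp add: sum_distrib_right mult.assoc)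
  also have "\<dots> \<le> (\<Sum>i\<in>S. w i * (r * g i + (1 - r) * c))"
    by (intro sum_mono mult_left_mono pt w)
  also have "\<dots> = r * (\<Sum>i\<in>S. w i * g i) + (1 - r) * c * (\<Sum>i\<in>S. w i)"
    by (simp add: distrib_left sum.distrib sum_distrib_left mult_ac)
  also have "\<dots> = r * c + (1 - r) * c" using ws by (simp add: c_def)
  also have "\<dots> = c powr r * c powr (1 - r)"
    using c0 by (simp add: powr_add[symmetric] algebra_simps)
  finally have F: "(\<Sum>i\<in>S. w i * g i powr r) * c powr (1 - r) \<le> c powr r * c powr (1 - r)" .
  have "0 < c powr (1 - r)" using c0 by simp
  from mult_right_le_imp_le[OF F this] show ?thesis unfolding c_def .
qed

lemma sum_pmf_finite: "(\<Sum>x\<in>(UNIV::'a::finite set). pmf p x) = 1"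
  by (rule sum_pmf_eq_1) auto

lemma integral_pmf_finite_sum:
  fixes f :: "'a::finite \<Rightarrow> real"
  shows "measure_pmf.expectation p f = (\<Sum>x\<in>UNIV. pmf p x * f x)"
  by (subst integral_measure_pmf_real[where A=UNIV]) (auto simp: mult.commute)

lemma core_avg:
  fixes p :: "'x::finite pmf" and m :: "'m::finite" and a :: "'x \<Rightarrow> real"
    and b :: "'m \<Rightarrow> 'x \<Rightarrow> real" and r :: real
  assumes a: "\<And>x. 0 \<le> a x" and b: "\<And>m x. 0 \<le> b m x" and r: "0 < r" "r \<le> 1"
  shows "(\<Sum>e\<in>UNIV. pmf (Pi_pmf UNIV dflt (\<lambda>_. p)) e * (a (e m) * (\<Sum>m'\<in>-{m}. b m' (e m')) powr r))
     \<le> (\<Sum>x\<in>UNIV. pmf p x * a x) * (\<Sum>m'\<in>-{m}. \<Sum>x\<in>UNIV. pmf p x * b m' x) powr r"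
proof -
  define Q' where "Q' = Pi_pmf (-{m}) dflt (\<lambda>_. p)"
  define G where "G = (\<lambda>f::'m\<Rightarrow>'x. (\<Sum>m'\<in>-{m}. b m' (f m')) powr r)"
  have U: "(UNIV::'m set) = insert m (-{m})" by auto
  have Q: "Pi_pmf UNIV dflt (\<lambda>_. p) = map_pmf (\<lambda>(y,f). f(m:=y)) (pair_pmf p Q')"
    unfolding Q'_def by (subst U, rule Pi_pmf_insert) auto
  have "(\<Sum>e\<in>UNIV. pmf (Pi_pmf UNIV dflt (\<lambda>_. p)) e * (a (e m) * G e))
      = measure_pmf.expectation (Pi_pmf UNIV dflt (\<lambda>_. p)) (\<lambda>e. a (e m) * G e)"
    by (simp add: integral_pmf_finite_sum)
  also have "\<dots> = measure_pmf.expectation (pair_pmf p Q') (\<lambda>z. a (fst z) * G (snd z))"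
    unfolding Q integral_map_pmf
    by (rule Bochner_Integration.integral_cong) (auto simp: G_def)
  also have "\<dots> = (\<Sum>z\<in>UNIV. pmf p (fst z) * pmf Q' (snd z) * (a (fst z) * G (snd z)))"
    unfolding integral_pmf_finite_sum
    by (intro sum.cong refl) (metis pmf_pair prod.collapse)
  also have "\<dots> = (\<Sum>y\<in>UNIV. \<Sum>f\<in>UNIV. pmf p y * pmf Q' f * (a y * G f))"
    unfolding UNIV_Times_UNIV[symmetric] sum.cartesian_product by (simp add: case_prod_beta)
  also have "\<dots> = (\<Sum>y\<in>UNIV. pmf p y * a y) * (\<Sum>f\<in>UNIV. pmf Q' f * G f)"
    by (simp add: sum_product mult_ac)
  also have "\<dots> \<le> (\<Sum>y\<in>UNIV. pmf p y * a y) * (\<Sum>f\<in>UNIV. pmf Q' f * (\<Sum>m'\<in>-{m}. b m' (f m'))) powr r"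
    unfolding G_def
    by (intro mult_left_mono jensen_powr_sum sum_nonneg mult_nonneg_nonneg a b r) 
       (auto simp: sum_pmf_finite)
  also have "(\<Sum>f\<in>UNIV. pmf Q' f * (\<Sum>m'\<in>-{m}. b m' (f m'))) = (\<Sum>m'\<in>-{m}. \<Sum>x\<in>UNIV. pmf p x * b m' x)"
  proof -
    have "(\<Sum>f\<in>UNIV. pmf Q' f * (\<Sum>m'\<in>-{m}. b m' (f m'))) = (\<Sum>m'\<in>-{m}. \<Sum>f\<in>UNIV. pmf Q' f * b m' (f m'))"
      by (simp add: sum_distrib_left sum.swap[of _ UNIV])
    also have "\<dots> = (\<Sum>m'\<in>-{m}. measure_pmf.expectation Q' (\<lambda>f. b m' (f m')))"
      by (simp add: integral_pmf_finite_sum)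
    also have "\<dots> = (\<Sum>m'\<in>-{m}. measure_pmf.expectation (map_pmf (\<lambda>f. f m') Q') (b m'))"
      by simp
    also have "\<dots> = (\<Sum>m'\<in>-{m}. measure_pmf.expectation p (b m'))"
      by (intro sum.cong refl) (simp add: Q'_def Pi_pmf_component)
    finally show ?thesis by (simp add: integral_pmf_finite_sum)
  qed
  finally show ?thesis unfolding G_def .
qed


lemma dist_pmf:
  fixes P :: "'a::finite \<Rightarrow> real"
  assumes "is_dist P" shows "pmf (embed_pmf P) = P"
proof -
  have nn: "\<And>x. 0 \<le> P x" and s: "(\<Sum>x\<in>UNIV. P x) = 1" using assms by (auto simp: is_dist_def)
  have "(\<integral>\<^sup>+x. ennreal (P x) \<partial>count_space UNIV) = 1"
    using nn s by (simp add: nn_integral_count_space_finite)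
  then show ?thesis using nn by (intro ext pmf_embed_pmf) auto
qed

lemma mul_self_powr: "0 \<le> (x::real) \<Longrightarrow> x * x powr r = x powr (1 + r)"
  by (cases "x = 0") (auto simp: powr_add)

lemma step_b:
  fixes q :: "'m::finite \<Rightarrow> real" and lam r :: real
  assumes q: "\<And>m. 0 \<le> q m" and D: "\<And>m'. q m' \<le> q D" and mD: "m \<noteq> D"
    and lam: "0 \<le> lam" and r: "0 \<le> r" and lr: "lam + lam * r = 1"
  shows "q m \<le> q m powr lam * (\<Sum>m'\<in>-{m}. q m' powr lam) powr r"
proof -
  have "q D powr lam \<le> (\<Sum>m'\<in>-{m}. q m' powr lam)"
    using mD by (intro member_le_sum) auto
  moreover have "q m powr lam \<le> q D powr lam" using D q lam by (intro powr_mono2) auto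
  ultimately have "(q m powr lam) powr r \<le> (\<Sum>m'\<in>-{m}. q m' powr lam) powr r"
    using r by (intro powr_mono2) auto
  then have "q m powr lam * (q m powr lam) powr r \<le> q m powr lam * (\<Sum>m'\<in>-{m}. q m' powr lam) powr r"
    by (intro mult_left_mono) auto
  moreover have "q m powr lam * (q m powr lam) powr r = q m"
    using lr q[of m] by (simp add: powr_powr powr_add[symmetric] powr_one)
  ultimately show ?thesis by simp
qed

theorem mainTheorem3:
  fixes PM :: "'m::finite \<Rightarrow> real"
    and W :: "'x::finite \<Rightarrow> 'y::finite \<Rightarrow> real"
    and PX :: "'x \<Rightarrow> real"
    and s :: real
  assumes "is_dist PM" and "is_channel W" and "is_dist PX"
    and "0 < s" and "s \<le> 1 / 2"
  shows "P_js PM W \<le> exp ((s / (1 - s)) * (H_renyi s PM - I_up s PX W))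
       \<and> exp ((s / (1 - s)) * (H_renyi s PM - I_up s PX W))
         = (\<Sum>m\<in>UNIV. PM m powr (1 - s)) powr (1 / (1 - s))
           * (\<Sum>y\<in>UNIV. (\<Sum>x\<in>UNIV. PX x * W x y powr (1 - s)) powr (1 / (1 - s)))"
proof -
  note PM = \<open>is_dist PM\<close> and Wc = \<open>is_channel W\<close> and PX = \<open>is_dist PX\<close>
  have PMn: "\<And>m. 0 \<le> PM m" and PMs: "(\<Sum>m\<in>UNIV. PM m) = 1" using PM by (auto simp: is_dist_def)
  have PXn: "\<And>x. 0 \<le> PX x" and PXs: "(\<Sum>x\<in>UNIV. PX x) = 1" using PX by (auto simp: is_dist_def)
  have Wn: "\<And>x y. 0 \<le> W x y" and Ws: "\<And>x. (\<Sum>y\<in>UNIV. W x y) = 1"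
    using Wc by (auto simp: is_channel_def is_dist_def)
  define lam where "lam = 1 - s"
  define r where "r = s / (1 - s)"
  have lam0: "0 < lam" and r0: "0 < r" and r1: "r \<le> 1" 
    using \<open>0 < s\<close> \<open>s \<le> 1/2\<close> by (auto simp: lam_def r_def field_simps)
  have lr: "lam + lam * r = 1" using \<open>s \<le> 1/2\<close> by (simp add: lam_def r_def field_simps)
  have r1s: "1 + r = 1 / (1 - s)" using \<open>s \<le> 1/2\<close> by (simp add: r_def field_simps)
  define A where "A = (\<Sum>m\<in>UNIV. PM m powr lam)"
  define c where "c = (\<lambda>y. \<Sum>x\<in>UNIV. PX x * W x y powr lam)"
  define B where "B = (\<Sum>y\<in>UNIV. c y powr (1 / (1 - s)))"
  have cn: "\<And>y. 0 \<le> c y" unfolding c_def by (intro sum_nonneg mult_nonneg_nonneg PXn) auto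
  obtain m0 where "PM m0 > 0"
    using PMs PMn by (metis less_eq_real_def sum.neutral zero_neq_one)
  then have A0: "A > 0" unfolding A_def by (intro sum_pos2[of _ m0]) auto
  obtain x0 where x0: "PX x0 > 0"
    using PXs PXn by (metis less_eq_real_def sum.neutral zero_neq_one)
  obtain y0 where y0: "W x0 y0 > 0"
    using Ws[of x0] Wn by (metis less_eq_real_def sum.neutral zero_neq_one)
  have "c y0 > 0" unfolding c_def using x0 y0 PXn
    by (intro sum_pos2[of _ x0]) auto
  then have B0: "B > 0" unfolding B_def by (intro sum_pos2[of _ y0]) auto
  have eq: "exp ((s / (1 - s)) * (H_renyi s PM - I_up s PX W)) = A powr (1 / (1 - s)) * B"
  proof -
    have "(s / (1 - s)) * (H_renyi s PM - I_up s PX W) = ln A / (1 - s) + ln B"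
      using \<open>0 < s\<close> \<open>s \<le> 1/2\<close>
      by (simp add: H_renyi_def I_up_def A_def B_def c_def lam_def field_simps)
    then show ?thesis using A0 B0 by (simp add: exp_add powr_def)
  qed
  define p where "p = embed_pmf PX"
  have pp: "pmf p = PX" unfolding p_def by (rule dist_pmf[OF PX])
  define Q where "Q = Pi_pmf (UNIV::'m set) undefined (\<lambda>_. p)"
  define w where "w = pmf Q"
  have wn: "\<And>e. 0 \<le> w e" unfolding w_def by simp
  have ws: "(\<Sum>e\<in>UNIV. w e) = 1" unfolding w_def by (rule sum_pmf_finite)
  define q where "q = (\<lambda>e m y. PM m * W (e m) y)"
  have qn: "\<And>e m y. 0 \<le> q e m y" unfolding q_def using PMn Wn by simp
  define d where "d = (\<lambda>e y. SOME m1. \<forall>m'. q e m' y \<le> q e m1 y)"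
  have dmax: "\<And>m'. q e m' y \<le> q e (d e y) y" for e y
  proof -
    have "Max (range (\<lambda>m. q e m y)) \<in> range (\<lambda>m. q e m y)" by (rule Max_in) auto
    then obtain m1 where m1: "Max (range (\<lambda>m. q e m y)) = q e m1 y" by blast
    have "\<forall>m'. q e m' y \<le> q e m1 y" unfolding m1[symmetric] by (intro allI Max_ge) auto
    then show "\<And>m'. q e m' y \<le> q e (d e y) y" unfolding d_def by (rule someI2) auto
  qed
  define R where "R = (\<lambda>e m y. q e m y powr lam * (\<Sum>m'\<in>-{m}. q e m' y powr lam) powr r)"
  have Rn: "\<And>e m y. 0 \<le> R e m y" unfolding R_def by simp
  have step1: "err_prob PM W e (d e) \<le> (\<Sum>m\<in>UNIV. \<Sum>y\<in>UNIV. R e m y)" for e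
  proof -
    have "err_prob PM W e (d e) = (\<Sum>m\<in>UNIV. \<Sum>y\<in>{y. d e y \<noteq> m}. q e m y)"
      unfolding err_prob_def q_def by (simp add: sum_distrib_left)
    also have "\<dots> \<le> (\<Sum>m\<in>UNIV. \<Sum>y\<in>{y. d e y \<noteq> m}. R e m y)"
    proof (intro sum_mono)
      fix m y assume "y \<in> {y. d e y \<noteq> m}"
      then have mD: "m \<noteq> d e y" by simp
      show "q e m y \<le> R e m y" unfolding R_def
        using step_b[where q = "\<lambda>m. q e m y" and D = "d e y" and m = m and lam = lam and r = r,
          OF qn dmax mD less_imp_le[OF lam0] less_imp_le[OF r0] lr] by simp
    qed
    also have "\<dots> \<le> (\<Sum>m\<in>UNIV. \<Sum>y\<in>UNIV. R e m y)"
      by (intro sum_mono sum_mono2 Rn) auto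
    finally show ?thesis .
  qed
  have step2: "(\<Sum>e\<in>UNIV. w e * R e m y) \<le> PM m powr lam * (c y * (A * c y) powr r)" for m y
  proof -
    have "(\<Sum>e\<in>UNIV. w e * R e m y) = PM m powr lam *
        (\<Sum>e\<in>UNIV. pmf Q e * (W (e m) y powr lam * (\<Sum>m'\<in>-{m}. PM m' powr lam * W (e m') y powr lam) powr r))"
      unfolding R_def q_def w_def by (simp add: powr_mult sum_distrib_left mult_ac)
    also have "\<dots> \<le> PM m powr lam * ((\<Sum>x\<in>UNIV. pmf p x * W x y powr lam) *
        (\<Sum>m'\<in>-{m}. \<Sum>x\<in>UNIV. pmf p x * (PM m' powr lam * W x y powr lam)) powr r)"
      unfolding Q_def
      by (intro mult_left_mono core_avg[where a = "\<lambda>x. W x y powr lam" and b = "\<lambda>m' x. PM m' powr lam * W x y powr lam"] r0 r1) auto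
    also have "(\<Sum>m'\<in>-{m}. \<Sum>x\<in>UNIV. pmf p x * (PM m' powr lam * W x y powr lam)) = (\<Sum>m'\<in>-{m}. PM m' powr lam) * c y"
      unfolding c_def pp sum_distrib_right by (rule sum.cong[OF refl]) (simp add: sum_distrib_left mult_ac)
    also have "(\<Sum>x\<in>UNIV. pmf p x * W x y powr lam) = c y" unfolding c_def pp ..
    also have "(\<Sum>m'\<in>-{m}. PM m' powr lam) * c y \<le> A * c y"
      unfolding A_def by (intro mult_right_mono cn sum_mono2) auto
    hence "((\<Sum>m'\<in>-{m}. PM m' powr lam) * c y) powr r \<le> (A * c y) powr r"
      using r0 cn by (intro powr_mono2 mult_nonneg_nonneg sum_nonneg) auto
    hence "PM m powr lam * (c y * ((\<Sum>m'\<in>-{m}. PM m' powr lam) * c y) powr r) \<le> PM m powr lam * (c y * (A * c y) powr r)"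
      using cn by (intro mult_left_mono) auto
    finally show ?thesis .
  qed
  have "P_js PM W \<le> (\<Sum>e\<in>UNIV. w e * err_prob PM W e (d e))"
  proof -
    have le: "P_js PM W \<le> err_prob PM W e (d e)" for e
      unfolding P_js_def
      by (rule cINF_lower2[where x = "(e, d e)"]) (auto intro: bdd_belowI2 finite_imageI)
    have "P_js PM W = (\<Sum>e\<in>UNIV. w e * P_js PM W)" by (simp add: sum_distrib_right[symmetric] ws)
    also have "\<dots> \<le> (\<Sum>e\<in>UNIV. w e * err_prob PM W e (d e))"
      by (intro sum_mono mult_left_mono le wn)
    finally show ?thesis .
  qed
  also have "\<dots> \<le> (\<Sum>e\<in>UNIV. w e * (\<Sum>m\<in>UNIV. \<Sum>y\<in>UNIV. R e m y))"
    by (intro sum_mono mult_left_mono step1 wn)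
  also have "\<dots> = (\<Sum>e\<in>UNIV. \<Sum>m\<in>UNIV. \<Sum>y\<in>UNIV. w e * R e m y)"
    by (simp add: sum_distrib_left)
  also have "\<dots> = (\<Sum>m\<in>UNIV. \<Sum>e\<in>UNIV. \<Sum>y\<in>UNIV. w e * R e m y)"
    by (rule sum.swap)
  also have "\<dots> = (\<Sum>m\<in>UNIV. \<Sum>y\<in>UNIV. \<Sum>e\<in>UNIV. w e * R e m y)"
    by (rule sum.cong[OF refl], rule sum.swap)
  also have "\<dots> \<le> (\<Sum>m\<in>UNIV. \<Sum>y\<in>UNIV. PM m powr lam * (c y * (A * c y) powr r))"
    by (intro sum_mono step2)
  also have "\<dots> = (\<Sum>m\<in>UNIV. PM m powr lam * (\<Sum>y\<in>UNIV. c y * (A * c y) powr r))"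
    by (simp only: sum_distrib_left)
  also have "\<dots> = A * (\<Sum>y\<in>UNIV. c y * (A * c y) powr r)"
    unfolding A_def by (simp only: sum_distrib_right)
  also have "\<dots> = A powr (1 / (1 - s)) * B"
  proof -
    have "A * (\<Sum>y\<in>UNIV. c y * (A * c y) powr r) = (\<Sum>y\<in>UNIV. (A * A powr r) * (c y * c y powr r))"
      using A0 cn by (simp add: powr_mult sum_distrib_left mult_ac)
    also have "\<dots> = (\<Sum>y\<in>UNIV. A powr (1 / (1 - s)) * c y powr (1 / (1 - s)))"
      using A0 cn by (simp add: mul_self_powr r1s)
    finally show ?thesis by (simp add: B_def sum_distrib_left)
  qed
  finally have ineq: "P_js PM W \<le> A powr (1 / (1 - s)) * B" .
  show ?thesis using eq ineq by (simp add: A_def B_def c_def lam_def)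
qed

end
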